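(* Fix an integer $m\ge1$ and define numbers $r_n$ by $\sum_{n\ge0} r_n x^n=\dfrac{1}{1-x-x^m}$. Then for every $n\ge m+1$, $$r_{n-m-1}=\sum_{(a_1,\dots,a_k)\in C(n)}\Bigl\lfloor\frac{a_1-1}{m}\Bigr\rfloor\cdots\Bigl\lfloor\frac{a_k-1}{m}\Bigr\rfloor,$$ where the only nonzero terms come from compositions in which every part is at least $m+1$.
   Context: $C(n)$ denotes the set of all compositions $(a_1,\dots,a_k)$ of $n$ (finite sequences of positive integers with sum $n$), with any number $k$ of parts. *)

theory Defs
  imports Complex_Main "HOL-Computational_Algebra.Formal_Power_Series"
begin

definition compositions :: "nat \<Rightarrow> nat list set" where
  "compositions n = {as. (\<forall>a\<in>set as. 0 < a) \<and> sum_list as = n}"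

definition rseq :: "nat \<Rightarrow> nat \<Rightarrow> rat" where
  "rseq m n = fps_nth (inverse (1 - fps_X - fps_X ^ m)) n"

end

theory Submission
  imports Defs
begin

definition G :: "nat \<Rightarrow> nat \<Rightarrow> int" where
  "G m a = \<lfloor>(of_nat a - 1) / (of_nat m :: rat)\<rfloor>"

lemma G_pos: "a \<ge> 1 \<Longrightarrow> G m a = int ((a - 1) div m)"
proof -
  assume "a \<ge> 1"
  then obtain b where b: "a = Suc b" by (cases a) auto
  then have eq: "(of_nat a - 1 :: rat) = of_nat (a - 1)" by simp
  have "G m a = \<lfloor>of_nat (a - 1) / (of_nat m :: rat)\<rfloor>" unfolding G_def eq ..
  also have "\<dots> = of_nat ((a - 1) div m)" by (rule floor_divide_of_nat_eq)
  finally show ?thesis .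
qed

lemma length_le_sum: "\<forall>a\<in>set as. 0 < a \<Longrightarrow> length as \<le> sum_list (as::nat list)"
  by (induction as) auto

lemma finite_comp: "finite (compositions n)"
proof -
  have "compositions n \<subseteq> {xs. set xs \<subseteq> {0..n} \<and> length xs \<le> n}"
  proof
    fix xs assume "xs \<in> compositions n"
    then have p: "\<forall>a\<in>set xs. 0 < a" and s: "sum_list xs = n" unfolding compositions_def by auto
    have "set xs \<subseteq> {0..n}"
    proof
      fix x assume "x \<in> set xs"
      then have "x \<le> sum_list xs" by (simp add: member_le_sum_list)
      then show "x \<in> {0..n}" using s by simp
    qed
    moreover have "length xs \<le> n" using length_le_sum[OF p] s by simp
    ultimately show "xs \<in> {xs. set xs \<subseteq> {0..n} \<and> length xs \<le> n}" by simp
  qed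
  then show ?thesis using finite_lists_length_le[of "{0..n}" n] finite_subset by blast
qed

lemma comp_0: "compositions 0 = {[]}"
proof -
  have "xs = []" if "xs \<in> compositions 0" for xs
  proof (cases xs)
    case (Cons a as)
    with that show ?thesis unfolding compositions_def by auto
  qed simp
  then show ?thesis unfolding compositions_def by auto
qed

lemma comp_Suc: "n > 0 \<Longrightarrow> compositions n = (\<Union>a\<in>{1..n}. (#) a ` compositions (n - a))"
proof (rule set_eqI, rule iffI)
  fix xs assume n: "n > 0" and xs: "xs \<in> compositions n"
  then obtain a as where xa: "xs = a # as" unfolding compositions_def by (cases xs) auto
  from xs xa have a: "a > 0" and p: "\<forall>b\<in>set as. 0 < b" and s: "a + sum_list as = n"
    unfolding compositions_def by auto
  have "as \<in> compositions (n - a)" using p s unfolding compositions_def by auto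
  moreover have "a \<in> {1..n}" using a s by auto
  ultimately show "xs \<in> (\<Union>a\<in>{1..n}. (#) a ` compositions (n - a))"
    unfolding xa by blast
next
  fix xs assume "xs \<in> (\<Union>a\<in>{1..n}. (#) a ` compositions (n - a))"
  then obtain a as where "a \<in> {1..n}" "as \<in> compositions (n - a)" "xs = a # as" by blast
  then show "xs \<in> compositions n" unfolding compositions_def by auto
qed

definition S :: "nat \<Rightarrow> nat \<Rightarrow> int" where
  "S m n = (\<Sum>as\<in>compositions n. \<Prod>a\<leftarrow>as. G m a)"

lemma S_0: "S m 0 = 1" unfolding S_def comp_0 by simp

lemma S_rec: "n > 0 \<Longrightarrow> S m n = (\<Sum>a=1..n. G m a * S m (n - a))"
proof -
  assume n: "n > 0"
  have "S m n = (\<Sum>a\<in>{1..n}. \<Sum>xs\<in>(#) a ` compositions (n - a). \<Prod>b\<leftarrow>xs. G m b)"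
    unfolding S_def comp_Suc[OF n]
    by (rule sum.UNION_disjoint) (auto simp: finite_comp)
  also have "\<dots> = (\<Sum>a=1..n. G m a * S m (n - a))"
  proof (rule sum.cong[OF refl])
    fix a
    have "(\<Sum>xs\<in>(#) a ` compositions (n - a). \<Prod>b\<leftarrow>xs. G m b)
        = (\<Sum>as\<in>compositions (n - a). \<Prod>b\<leftarrow>a # as. G m b)"
      by (subst sum.reindex) (auto simp: inj_on_def)
    also have "\<dots> = G m a * S m (n - a)" unfolding S_def by (simp add: sum_distrib_left)
    finally show "(\<Sum>xs\<in>(#) a ` compositions (n - a). \<Prod>b\<leftarrow>xs. G m b) = G m a * S m (n - a)" .
  qed
  finally show ?thesis .
qed

definition Ff :: "nat \<Rightarrow> rat fps" where
  "Ff m = Abs_fps (\<lambda>a. if a = 0 then 0 else of_int (G m a))"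

definition Sf :: "nat \<Rightarrow> rat fps" where
  "Sf m = Abs_fps (\<lambda>n. of_int (S m n))"

lemma Sf_eq: "Sf m = 1 + Ff m * Sf m"
proof (rule fps_ext)
  fix n
  show "fps_nth (Sf m) n = fps_nth (1 + Ff m * Sf m) n"
  proof (cases "n = 0")
    case True then show ?thesis by (simp add: Sf_def Ff_def S_0)
  next
    case False
    have "fps_nth (Ff m * Sf m) n = (\<Sum>i=0..n. fps_nth (Ff m) i * fps_nth (Sf m) (n - i))" by (rule fps_mult_nth)
    also have "\<dots> = (\<Sum>i=1..n. fps_nth (Ff m) i * fps_nth (Sf m) (n - i))"
      by (simp add: sum.atLeast_Suc_atMost Ff_def)
    also have "\<dots> = of_int (\<Sum>a=1..n. G m a * S m (n - a))"
      by (simp add: Ff_def Sf_def)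
    finally show ?thesis using False by (simp add: Sf_def S_rec)
  qed
qed


lemma Ff_nth: "fps_nth (Ff m) a = (if a = 0 then 0 else of_nat ((a - 1) div m))"
  unfolding Ff_def using G_pos[of a m] by simp

lemma divl: "(m::nat) \<ge> 1 \<Longrightarrow> n > m \<Longrightarrow> (n - 1) div m = (n - m - 1) div m + 1"
proof -
  assume m: "m \<ge> 1" and nm: "n > m"
  have "n - 1 = (n - m - 1) + m" using nm m by simp
  then have "(n - 1) div m = ((n - m - 1) + m) div m" by simp
  also have "\<dots> = (n - m - 1) div m + 1" using m by simp
  finally show ?thesis .
qed

lemma Ff_key:
  assumes m: "m \<ge> 1"
  shows "Ff m * ((1 - fps_X) * (1 - fps_X ^ m)) = fps_X ^ (m + 1)"
proof -
  define H :: "rat fps" where "H = Abs_fps (\<lambda>n. if n \<ge> m + 1 then 1 else 0)"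
  have 1: "(1 - fps_X ^ m) * Ff m = H"
  proof (rule fps_ext)
    fix n
    have "fps_nth ((1 - fps_X ^ m) * Ff m) n = fps_nth (Ff m) n - fps_nth (fps_X ^ m * Ff m) n"
      by (simp only: left_diff_distrib mult_1 fps_sub_nth)
    also have "\<dots> = fps_nth H n"
    proof (cases "n < m")
      case True
      then have "(n - 1) div m = 0" by simp
      then have "fps_nth (Ff m) n = 0" by (simp add: Ff_nth)
      moreover have "fps_nth (fps_X ^ m * Ff m) n = 0" using True by (simp add: fps_X_power_mult_nth)
      moreover have "fps_nth H n = 0" using True by (simp add: H_def)
      ultimately show ?thesis by simp
    next
      case False
      show ?thesis
      proof (cases "n = m")
        case True
        have "(m - 1) div m = 0" using m by simp
        then have "fps_nth (Ff m) n = 0" using True by (simp add: Ff_nth)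
        moreover have "fps_nth (fps_X ^ m * Ff m) n = 0" using True by (simp add: fps_X_power_mult_nth Ff_nth)
        moreover have "fps_nth H n = 0" using True by (simp add: H_def)
        ultimately show ?thesis by simp
      next
        case False
        with \<open>\<not> n < m\<close> have nm: "n > m" by simp
        have d: "(n - 1) div m = (n - m - 1) div m + 1" using divl[OF m nm] .
        have "fps_nth (Ff m) n = of_nat ((n - m - 1) div m) + 1" using nm d by (simp add: Ff_nth)
        moreover have "fps_nth (fps_X ^ m * Ff m) n = of_nat ((n - m - 1) div m)"
          using nm by (simp add: fps_X_power_mult_nth Ff_nth)
        moreover have "fps_nth H n = 1" using nm by (simp add: H_def)
        ultimately show ?thesis by simp
      qed
    qed
    finally show "fps_nth ((1 - fps_X ^ m) * Ff m) n = fps_nth H n" .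
  qed
  have 2: "(1 - fps_X) * H = fps_X ^ (m + 1)"
  proof (rule fps_ext)
    fix n
    have "fps_nth ((1 - fps_X) * H) n = fps_nth H n - fps_nth (fps_X * H) n"
      by (simp only: left_diff_distrib mult_1 fps_sub_nth)
    also have "\<dots> = fps_nth (fps_X ^ (m + 1) :: rat fps) n"
      by (auto simp: H_def fps_X_power_nth)
    finally show "fps_nth ((1 - fps_X) * H) n = fps_nth (fps_X ^ (m + 1) :: rat fps) n" .
  qed
  have "Ff m * ((1 - fps_X) * (1 - fps_X ^ m)) = (1 - fps_X) * ((1 - fps_X ^ m) * Ff m)"
    by (simp only: mult.commute mult.left_commute)
  then show ?thesis using 1 2 by simp
qed
theorem proposition7:
  fixes m n :: nat
  assumes "m \<ge> 1" and "n \<ge> m + 1"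
  shows "rseq m (n - m - 1) =
           of_int (\<Sum>as\<in>compositions n.
                     \<Prod>a\<leftarrow>as. \<lfloor>(of_nat a - 1) / (of_nat m :: rat)\<rfloor>)
         \<and> (\<forall>as\<in>compositions n.
              (\<Prod>a\<leftarrow>as. \<lfloor>(of_nat a - 1) / (of_nat m :: rat)\<rfloor>) \<noteq> 0
              \<longrightarrow> (\<forall>a\<in>set as. a \<ge> m + 1))"
proof
  define P :: "rat fps" where "P = 1 - fps_X - fps_X ^ m"
  define Q :: "rat fps" where "Q = (1 - fps_X) * (1 - fps_X ^ m)"
  define R :: "rat fps" where "R = fps_X ^ (m + 1)"
  have P0: "fps_nth P 0 \<noteq> 0" using assms(1) by (simp add: P_def)
  have QPR: "Q = P + R"
  proof -
    have "Q = 1 - fps_X - fps_X ^ m + fps_X * fps_X ^ m"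
      unfolding Q_def by (simp add: right_diff_distrib left_diff_distrib)
    then show ?thesis unfolding P_def R_def by simp
  qed
  have SF: "Sf m * (1 - Ff m) = 1"
  proof -
    have "Sf m * (1 - Ff m) = Sf m - Ff m * Sf m" by (simp add: right_diff_distrib mult.commute)
    then show ?thesis using Sf_eq[of m] by (metis add_diff_cancel_right')
  qed
  have FK: "Ff m * Q = R" unfolding Q_def R_def by (rule Ff_key[OF assms(1)])
  have "Sf m * P = Sf m * (Q - Ff m * Q)" using QPR FK by simp
  also have "\<dots> = (Sf m * (1 - Ff m)) * Q" by (simp add: left_diff_distrib right_diff_distrib mult.assoc)
  also have "\<dots> = P + R" using SF QPR by simp
  finally have SP: "Sf m * P = P + R" .
  have "Sf m = Sf m * P * inverse P" using P0 by (simp add: mult.assoc inverse_mult_eq_1')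
  also have "\<dots> = (P + R) * inverse P" using SP by simp
  also have "\<dots> = 1 + R * inverse P" using P0 by (simp add: distrib_right inverse_mult_eq_1')
  finally have "fps_nth (Sf m) n = fps_nth (1 + R * inverse P) n" by simp
  moreover have "fps_nth (R * inverse P) n = fps_nth (inverse P) (n - m - 1)"
    unfolding R_def fps_X_power_mult_nth using assms(2) by simp
  ultimately have "of_int (S m n) = fps_nth (inverse P) (n - m - 1)"
    using assms(2) by (simp add: Sf_def)
  then have "rseq m (n - m - 1) = of_int (S m n)" unfolding rseq_def P_def by simp
  then show "rseq m (n - m - 1) = of_int (\<Sum>as\<in>compositions n.
                     \<Prod>a\<leftarrow>as. \<lfloor>(of_nat a - 1) / (of_nat m :: rat)\<rfloor>)"
    unfolding S_def G_def by (simp only: fun_eq_iff)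
next
  show "\<forall>as\<in>compositions n.
              (\<Prod>a\<leftarrow>as. \<lfloor>(of_nat a - 1) / (of_nat m :: rat)\<rfloor>) \<noteq> 0
              \<longrightarrow> (\<forall>a\<in>set as. a \<ge> m + 1)"
  proof (intro ballI impI)
    fix as a assume as: "as \<in> compositions n"
      and p: "(\<Prod>a\<leftarrow>as. \<lfloor>(of_nat a - 1) / (of_nat m :: rat)\<rfloor>) \<noteq> 0"
      and a: "a \<in> set as"
    have "G m a \<noteq> 0"
    proof
      assume "G m a = 0"
      then have "(\<Prod>a\<leftarrow>as. G m a) = 0" using a by (simp add: prod_list_zero_iff)
      then show False using p unfolding G_def by (simp only: fun_eq_iff)
    qed
    moreover have "a \<ge> 1" using as a by (auto simp: compositions_def)
    ultimately show "a \<ge> m + 1" by (cases "a \<le> m") (auto simp: G_pos)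
  qed
qed

end
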